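(* (1) If $(X,d)$ is a compact Busemann G-space and $S\subset X$ is the closure of a non-empty open subset of $X$, then the travel time map $\mathcal R_{X,S}\colon (X,d)\to(C(S),\|\cdot\|_\infty)$ is a topological embedding. (2) Let $(X,d)$ be a compact length space with closed measurement set $S$ such that $\mathcal R_{X,S}$ is a topological embedding, and let $\varepsilon>0$. Then $(X,d)$ with $S$ is $\mathrm{FLIE}_\varepsilon$ if and only if for all $p,q\in X$ with $d(p,q)<\varepsilon$ there is a distance minimizing curve from $p$ to $q$ (or from $q$ to $p$) that extends to a distance minimizing curve ending at some point of $S$.
   Context: A Busemann G-space is a metric space that is finitely compact (closed bounded sets are compact), metrically (Menger) convex, in which geodesics are locally extendable (every point has a neighborhood in which any shortest curve extends beyond its endpoints as a shortest curve), and in which geodesics do not branch (two shortest curves agreeing on a nontrivial initial segment coincide); compact Busemann G-spaces are length spaces. For a compact length space $(X,d)$ and closed $S\subset X$, $\mathcal R_{X,S}(p)(z)=d(p,z)$ for $z\in S$. A continuous map $f\colon (X,d_X)\to(Y,d_Y)$ is an $\varepsilon$-local isometry if $d_Y(f(p),f(q))=d_X(p,q)$ whenever $d_X(p,q)<\varepsilon$. $(X,d)$ with $S$ is $\mathrm{FLIE}_\varepsilon$ if $\mathcal R_{X,S}$ is a topological embedding and $\mathcal R_{X,S}\colon(X,d)\to(C(S),\|\cdot\|_\infty)$ is an $\varepsilon$-local isometry. *)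

theory Defs
  imports "HOL-Analysis.Analysis"
begin

text \<open>Throughout, a metric space (X,d) is modelled as a subset X of a type of
  class metric_space, with d = dist restricted to X.\<close>

definition curve_length :: "(real \<Rightarrow> 'a::metric_space) \<Rightarrow> real \<Rightarrow> real \<Rightarrow> ereal" where
  "curve_length g a b =
     (SUP nt \<in> {(n, t). t 0 = a \<and> t n = b \<and> (\<forall>i<n. t i \<le> t (Suc i))}.
        ereal (\<Sum>i<fst nt. dist (g (snd nt i)) (g (snd nt (Suc i)))))"

definition length_space :: "'a::metric_space set \<Rightarrow> bool" where
  "length_space X \<longleftrightarrow>
     (\<forall>p\<in>X. \<forall>q\<in>X. ereal (dist p q) =
        (INF g \<in> {g. path g \<and> path_image g \<subseteq> X \<and> pathstart g = p \<and> pathfinish g = q}.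
           curve_length g 0 1))"

definition shortest_curve :: "'a::metric_space set \<Rightarrow> (real \<Rightarrow> 'a) \<Rightarrow> real \<Rightarrow> real \<Rightarrow> bool" where
  "shortest_curve X g a b \<longleftrightarrow> a \<le> b \<and> g ` {a..b} \<subseteq> X \<and>
     (\<forall>s\<in>{a..b}. \<forall>t\<in>{a..b}. dist (g s) (g t) = \<bar>s - t\<bar>)"

definition finitely_compact :: "'a::metric_space set \<Rightarrow> bool" where
  "finitely_compact X \<longleftrightarrow>
     (\<forall>A. A \<subseteq> X \<and> closedin (top_of_set X) A \<and> bounded A \<longrightarrow> compact A)"

definition menger_convex :: "'a::metric_space set \<Rightarrow> bool" where
  "menger_convex X \<longleftrightarrow>
     (\<forall>x\<in>X. \<forall>y\<in>X. x \<noteq> y \<longrightarrow>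
        (\<exists>z\<in>X. z \<noteq> x \<and> z \<noteq> y \<and> dist x z + dist z y = dist x y))"

definition locally_extendable :: "'a::metric_space set \<Rightarrow> bool" where
  "locally_extendable X \<longleftrightarrow>
     (\<forall>p\<in>X. \<exists>r>0. \<forall>g a b. shortest_curve X g a b \<and> a < b \<and> g ` {a..b} \<subseteq> ball p r \<longrightarrow>
        (\<exists>h a' b'. a' < a \<and> b < b' \<and> shortest_curve X h a' b' \<and>
                   (\<forall>t\<in>{a..b}. h t = g t)))"

definition non_branching :: "'a::metric_space set \<Rightarrow> bool" where
  "non_branching X \<longleftrightarrow>
     (\<forall>g1 g2 a b1 b2 c. shortest_curve X g1 a b1 \<and> shortest_curve X g2 a b2 \<and>
        a < c \<and> c \<le> min b1 b2 \<and> (\<forall>t\<in>{a..c}. g1 t = g2 t) \<longrightarrow>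
        (\<forall>t\<in>{a..min b1 b2}. g1 t = g2 t))"

definition busemann_G_space :: "'a::metric_space set \<Rightarrow> bool" where
  "busemann_G_space X \<longleftrightarrow> finitely_compact X \<and> menger_convex X \<and>
     locally_extendable X \<and> non_branching X"

definition CS :: "'a::metric_space set \<Rightarrow> ('a \<Rightarrow> real) metric" where
  "CS S = cfunspace (top_of_set S) euclidean_metric"

definition travel_time :: "'a::metric_space set \<Rightarrow> 'a \<Rightarrow> ('a \<Rightarrow> real)" where
  "travel_time S p = restrict (\<lambda>z. dist p z) S"

definition travel_time_embedding :: "'a::metric_space set \<Rightarrow> 'a set \<Rightarrow> bool" where
  "travel_time_embedding X S \<longleftrightarrow>
     embedding_map (top_of_set X) (mtopology_of (CS S)) (travel_time S)"

definition local_isometry_CS :: "real \<Rightarrow> 'a::metric_space set \<Rightarrow> 'a set \<Rightarrow> ('a \<Rightarrow> 'a \<Rightarrow> real) \<Rightarrow> bool" where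
  "local_isometry_CS eps X S f \<longleftrightarrow>
     continuous_map (top_of_set X) (mtopology_of (CS S)) f \<and>
     (\<forall>p\<in>X. \<forall>q\<in>X. dist p q < eps \<longrightarrow> mdist (CS S) (f p) (f q) = dist p q)"

definition FLIE :: "real \<Rightarrow> 'a::metric_space set \<Rightarrow> 'a set \<Rightarrow> bool" where
  "FLIE eps X S \<longleftrightarrow> travel_time_embedding X S \<and> local_isometry_CS eps X S (travel_time S)"

text \<open>There is a distance minimizing curve from p to q (the restriction of g to [0, d(p,q)])
  which extends to a distance minimizing curve (g on [0,c]) ending at a point of S.\<close>
definition extends_to_S :: "'a::metric_space set \<Rightarrow> 'a set \<Rightarrow> 'a \<Rightarrow> 'a \<Rightarrow> bool" where
  "extends_to_S X S p q \<longleftrightarrow>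
     (\<exists>g c. shortest_curve X g 0 c \<and> g 0 = p \<and> dist p q \<le> c \<and> g (dist p q) = q \<and> g c \<in> S)"

end

theory Submission
  imports Defs
begin


lemma sc_sub:
  assumes "shortest_curve X g a b" "a \<le> a'" "a' \<le> b'" "b' \<le> b"
  shows "shortest_curve X g a' b'"
  using assms unfolding shortest_curve_def by (auto simp: subset_eq)

lemma sc_shift:
  assumes "shortest_curve X g 0 L"
  shows "shortest_curve X (\<lambda>t. g (t - a)) a (a + L)"
  using assms unfolding shortest_curve_def
  by (auto simp: subset_eq)

lemma sc_rev:
  assumes "shortest_curve X g 0 D"
  shows "shortest_curve X (\<lambda>t. g (D - t)) 0 D"
  using assms unfolding shortest_curve_def
  by (auto simp: subset_eq)

lemma sc_concat:
  assumes f: "shortest_curve X f a b" and h: "shortest_curve X h b c"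
    and fh: "f b = h b" and d: "dist (f a) (h c) = c - a"
  shows "shortest_curve X (\<lambda>t. if t \<le> b then f t else h t) a c"
proof -
  have ab: "a \<le> b" "b \<le> c" using f h by (auto simp: shortest_curve_def)
  have fd: "\<And>s t. s\<in>{a..b} \<Longrightarrow> t\<in>{a..b} \<Longrightarrow> dist (f s) (f t) = \<bar>s - t\<bar>"
    and hd: "\<And>s t. s\<in>{b..c} \<Longrightarrow> t\<in>{b..c} \<Longrightarrow> dist (h s) (h t) = \<bar>s - t\<bar>"
    using f h by (auto simp: shortest_curve_def)
  have cross: "dist (f s) (h t) = t - s" if s: "s\<in>{a..b}" and t: "t\<in>{b..c}" for s t
  proof -
    have 1: "dist (f s) (h t) \<le> dist (f s) (f b) + dist (h b) (h t)"
      using dist_triangle[of "f s" "h t" "f b"] fh by simp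
    have 2: "dist (f a) (h c) \<le> dist (f a) (f s) + dist (f s) (h t) + dist (h t) (h c)"
      by (metis add.commute add_le_cancel_left dist_triangle order_trans)
    have "dist (f s) (f b) = b - s" "dist (h b) (h t) = t - b" "dist (f a) (f s) = s - a"
         "dist (h t) (h c) = c - t"
      using fd[of s b] hd[of b t] fd[of a s] hd[of t c] s t ab by auto
    with 1 2 d show ?thesis by linarith
  qed
  show ?thesis
    unfolding shortest_curve_def
  proof (intro conjI ballI)
    show "a \<le> c" using ab by simp
    show "(\<lambda>t. if t \<le> b then f t else h t) ` {a..c} \<subseteq> X"
      using f h by (auto simp: shortest_curve_def subset_eq)
  next
    fix s t assume s: "s \<in> {a..c}" and t: "t \<in> {a..c}"
    show "dist (if s \<le> b then f s else h s) (if t \<le> b then f t else h t) = \<bar>s - t\<bar>"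
    proof (cases "s \<le> b"; cases "t \<le> b")
      assume "s \<le> b" "t \<le> b" then show ?thesis using fd s t by auto
    next
      assume "s \<le> b" "\<not> t \<le> b" then show ?thesis using cross[of s t] s t by auto
    next
      assume "\<not> s \<le> b" "t \<le> b" then show ?thesis using cross[of t s] s t
        by (auto simp: dist_commute)
    next
      assume "\<not> s \<le> b" "\<not> t \<le> b" then show ?thesis using hd s t by auto
    qed
  qed
qed

fun dyad :: "('a \<Rightarrow> 'a \<Rightarrow> 'a) \<Rightarrow> 'a \<Rightarrow> 'a \<Rightarrow> nat \<Rightarrow> nat \<Rightarrow> 'a" where
  "dyad M p q 0 k = (if k = 0 then p else q)"
| "dyad M p q (Suc n) k = (if even k then dyad M p q n (k div 2)
     else M (dyad M p q n (k div 2)) (dyad M p q n (Suc (k div 2))))"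

lemma dyad_step:
  fixes g h :: "nat \<Rightarrow> 'a::metric_space"
  assumes iso: "\<And>j k. j \<le> N \<Longrightarrow> k \<le> N \<Longrightarrow> dist (g j) (g k) = \<delta> * \<bar>real j - real k\<bar>"
    and ev: "\<And>a. h (2*a) = g a"
    and od: "\<And>b. b < N \<Longrightarrow> dist (g b) (h (2*b+1)) = \<delta>/2 \<and> dist (h (2*b+1)) (g (Suc b)) = \<delta>/2"
    and jk: "j \<le> 2*N" "k \<le> 2*N"
  shows "dist (h j) (h k) = \<delta>/2 * \<bar>real j - real k\<bar>"
proof -
  have EO: "dist (g a) (h (2*b+1)) = \<delta>/2 * \<bar>real (2*a) - real (2*b+1)\<bar>"
    if a: "a \<le> N" and b: "b < N" for a b
  proof (cases "a \<le> b")
    case True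
    have "dist (g a) (h (2*b+1)) \<le> dist (g a) (g b) + dist (g b) (h (2*b+1))" by (rule dist_triangle)
    moreover have "dist (g a) (g (Suc b)) \<le> dist (g a) (h (2*b+1)) + dist (h (2*b+1)) (g (Suc b))"
      by (rule dist_triangle)
    moreover have "dist (g a) (g b) = \<delta> * (real b - real a)" using iso[of a b] True a b by simp
    moreover have "dist (g a) (g (Suc b)) = \<delta> * (real b + 1 - real a)" using iso[of a "Suc b"] True a b by simp
    moreover have "\<bar>real (2*a) - real (2*b+1)\<bar> = 2*real b + 1 - 2*real a" using True by simp
    ultimately show ?thesis using od[OF b] by (simp add: algebra_simps)
  next
    case False
    have "dist (g a) (h (2*b+1)) \<le> dist (g a) (g (Suc b)) + dist (g (Suc b)) (h (2*b+1))" by (rule dist_triangle)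
    moreover have "dist (g a) (g b) \<le> dist (g a) (h (2*b+1)) + dist (h (2*b+1)) (g b)"
      by (rule dist_triangle)
    moreover have "dist (g a) (g b) = \<delta> * (real a - real b)" using iso[of a b] False a b by simp
    moreover have "dist (g a) (g (Suc b)) = \<delta> * (real a - real b - 1)" using iso[of a "Suc b"] False a b by simp
    moreover have "\<bar>real (2*a) - real (2*b+1)\<bar> = 2*real a - 2*real b - 1" using False by simp
    ultimately show ?thesis using od[OF b] by (simp add: algebra_simps dist_commute)
  qed
  have OO0: "dist (h (2*b1+1)) (h (2*b2+1)) = \<delta>/2 * \<bar>real (2*b1+1) - real (2*b2+1)\<bar>"
    if b: "b1 < b2" "b2 < N" for b1 b2
  proof -
    have "dist (h (2*b1+1)) (h (2*b2+1)) \<le> dist (h (2*b1+1)) (g b2) + dist (g b2) (h (2*b2+1))" by (rule dist_triangle)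
    moreover have "dist (h (2*b1+1)) (g (Suc b2)) \<le> dist (h (2*b1+1)) (h (2*b2+1)) + dist (h (2*b2+1)) (g (Suc b2))"
      by (rule dist_triangle)
    moreover have "dist (h (2*b1+1)) (g b2) = \<delta>/2 * (2*real b2 - 2*real b1 - 1)"
      using EO[of b2 b1] b by (simp add: dist_commute)
    moreover have "dist (h (2*b1+1)) (g (Suc b2)) = \<delta>/2 * (2*real b2 - 2*real b1 + 1)"
      using EO[of "Suc b2" b1] b by (simp add: dist_commute)
    moreover have "\<bar>real (2*b1+1) - real (2*b2+1)\<bar> = 2*real b2 - 2*real b1" using b by simp
    ultimately show ?thesis using od[of b2] b by (simp add: algebra_simps)
  qed
  have OO: "dist (h (2*b1+1)) (h (2*b2+1)) = \<delta>/2 * \<bar>real (2*b1+1) - real (2*b2+1)\<bar>"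
    if b: "b1 < N" "b2 < N" for b1 b2
  proof -
    consider "b1 < b2" | "b1 = b2" | "b2 < b1" by linarith
    then show ?thesis
    proof cases
      case 1 then show ?thesis using OO0 b by blast
    next
      case 2 then show ?thesis by simp
    next
      case 3 then show ?thesis using OO0[of b2 b1] b by (simp add: dist_commute abs_minus_commute)
    qed
  qed
  show ?thesis
  proof (cases "even j"; cases "even k")
    assume "even j" "even k"
    then obtain a b where "j = 2*a" "k = 2*b" by (auto elim!: evenE)
    moreover have "\<bar>2*real a - 2*real b\<bar> = 2*\<bar>real a - real b\<bar>" by (auto simp: abs_if)
    ultimately show ?thesis using iso[of a b] jk ev by simp
  next
    assume "even j" "odd k"
    then obtain a b where "j = 2*a" "k = 2*b+1" by (auto elim!: evenE oddE)
    then show ?thesis using EO[of a b] jk ev by simp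
  next
    assume "odd j" "even k"
    then obtain a b where "j = 2*a+1" "k = 2*b" by (auto elim!: evenE oddE)
    then show ?thesis using EO[of b a] jk ev by (simp add: dist_commute abs_minus_commute)
  next
    assume "odd j" "odd k"
    then obtain a b where "j = 2*a+1" "k = 2*b+1" by (auto elim!: oddE)
    then show ?thesis using OO[of a b] jk by simp
  qed
qed




context
  fixes X :: "'a::metric_space set" and M :: "'a \<Rightarrow> 'a \<Rightarrow> 'a" and p q :: 'a
  assumes MX: "\<And>x y. x \<in> X \<Longrightarrow> y \<in> X \<Longrightarrow> M x y \<in> X \<and> dist x (M x y) = dist x y / 2 \<and> dist (M x y) y = dist x y / 2"
    and pX: "p \<in> X" and qX: "q \<in> X"
begin

lemma dyad_in: "dyad M p q n k \<in> X"
  by (induction n arbitrary: k) (auto simp: pX qX MX)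

lemma dyad_iso: "j \<le> 2^n \<Longrightarrow> k \<le> 2^n \<Longrightarrow>
   dist (dyad M p q n j) (dyad M p q n k) = dist p q / 2^n * \<bar>real j - real k\<bar>"
proof (induction n arbitrary: j k)
  case 0
  then have "j \<le> 1" "k \<le> 1" by auto
  then show ?case by (cases j; cases k) (auto simp: dist_commute)
next
  case (Suc n)
  have "dist (dyad M p q (Suc n) j) (dyad M p q (Suc n) k) = dist p q / 2^n / 2 * \<bar>real j - real k\<bar>"
  proof (rule dyad_step[where N="2^n" and g="dyad M p q n"])
    show "\<And>j k. j \<le> 2^n \<Longrightarrow> k \<le> 2^n \<Longrightarrow> dist (dyad M p q n j) (dyad M p q n k) = dist p q / 2^n * \<bar>real j - real k\<bar>"
      using Suc.IH by blast
    show "\<And>a. dyad M p q (Suc n) (2*a) = dyad M p q n a" by simp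
    show "dist (dyad M p q n b) (dyad M p q (Suc n) (2*b+1)) = dist p q / 2^n / 2 \<and>
          dist (dyad M p q (Suc n) (2*b+1)) (dyad M p q n (Suc b)) = dist p q / 2^n / 2"
      if b: "b < 2^n" for b
    proof -
      have e: "dist (dyad M p q n b) (dyad M p q n (Suc b)) = dist p q / 2^n"
        using Suc.IH[of b "Suc b"] b by simp
      show ?thesis using MX[OF dyad_in dyad_in, of n b n "Suc b"] e by simp
    qed
    show "j \<le> 2 * 2^n" "k \<le> 2 * 2^n" using Suc.prems by auto
  qed
  then show ?case by simp
qed

lemma dyad_lift: "dyad M p q (n+i) (k*2^i) = dyad M p q n k"
  by (induction i) auto

lemma dyad_zero: "dyad M p q n 0 = p"
  by (induction n) auto

lemma dyad_top: "dyad M p q n (2^n) = q"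
  by (induction n) auto

lemma dyad_cross:
  assumes "j \<le> 2^n" "k \<le> 2^m"
  shows "dist (dyad M p q n j) (dyad M p q m k) = \<bar>dist p q * j / 2^n - dist p q * k / 2^m\<bar>"
proof -
  have 1: "dyad M p q n j = dyad M p q (n+m) (j*2^m)" by (simp add: dyad_lift)
  have 2: "dyad M p q m k = dyad M p q (n+m) (k*2^n)" by (metis dyad_lift add.commute)
  have "j*2^m \<le> 2^(n+m)" "k*2^n \<le> 2^(n+m)" using assms by (auto simp: power_add)
  then have "dist (dyad M p q n j) (dyad M p q m k) = dist p q / 2^(n+m) * \<bar>real (j*2^m) - real (k*2^n)\<bar>"
    using dyad_iso 1 2 by simp
  also have "\<dots> = \<bar>dist p q / 2^(n+m) * (real (j*2^m) - real (k*2^n))\<bar>"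
    by (simp add: abs_mult)
  also have "dist p q / 2^(n+m) * (real (j*2^m) - real (k*2^n)) = dist p q * j / 2^n - dist p q * k / 2^m"
    by (simp add: power_add field_simps)
  finally show ?thesis .
qed

end

lemma geodesic_from_mid:
  fixes X :: "'a::metric_space set"
  assumes "compact X"
    and mid: "\<And>x y. x \<in> X \<Longrightarrow> y \<in> X \<Longrightarrow> \<exists>m\<in>X. dist x m = dist x y / 2 \<and> dist m y = dist x y / 2"
    and pX: "p \<in> X" and qX: "q \<in> X"
  shows "\<exists>g. shortest_curve X g 0 (dist p q) \<and> g 0 = p \<and> g (dist p q) = q"
proof (cases "p = q")
  case True
  then show ?thesis using pX by (auto simp: shortest_curve_def)
next
  case False
  define D where "D = dist p q"
  have D: "D > 0" using False by (simp add: D_def)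
  define M where "M x y = (SOME m. m\<in>X \<and> dist x m = dist x y / 2 \<and> dist m y = dist x y / 2)" for x y
  have MX: "M x y \<in> X \<and> dist x (M x y) = dist x y / 2 \<and> dist (M x y) y = dist x y / 2"
    if "x \<in> X" "y \<in> X" for x y
    unfolding M_def by (rule someI_ex) (use mid[OF that] in blast)
  define kn where "kn n t = nat \<lfloor>t * 2^n / D\<rfloor>" for n :: nat and t :: real
  define u where "u n t = D * real (kn n t) / 2^n" for n t
  define \<sigma> where "\<sigma> t n = dyad M p q n (kn n t)" for t n
  have kn_le: "kn n t \<le> 2^n" if "t \<le> D" for n t
  proof -
    have "t * 2^n / D \<le> 2^n" using that D by (simp add: field_simps)
    then have "\<lfloor>t * 2^n / D\<rfloor> \<le> 2^n" by (metis floor_mono floor_of_nat of_nat_numeral of_nat_power)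
    then show ?thesis unfolding kn_def by (simp add: nat_le_iff)
  qed
  have u_bd: "t - D / 2^n \<le> u n t \<and> u n t \<le> t" if "0 \<le> t" for n t
  proof -
    have x0: "0 \<le> t * 2^n / D" using that D by simp
    have r: "real (kn n t) = of_int \<lfloor>t * 2^n / D\<rfloor>" unfolding kn_def using x0 by simp
    define x where "x = t * 2^n / D"
    have f1: "of_int \<lfloor>x\<rfloor> \<le> x" and f2: "x < of_int \<lfloor>x\<rfloor> + 1" by linarith+
    have g1: "D * of_int \<lfloor>x\<rfloor> \<le> D * x" by (rule mult_left_mono) (use f1 D in auto)
    have g2: "D * x < D * (of_int \<lfloor>x\<rfloor> + 1)" by (rule mult_strict_left_mono) (use f2 D in auto)
    have dx: "D * x = t * 2^n" unfolding x_def using D by simp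
    have a: "D * real (kn n t) \<le> t * 2^n" "t * 2^n < D * real (kn n t) + D"
      using g1 g2 dx r unfolding x_def[symmetric] by (simp_all add: algebra_simps)
    have p2: "(0::real) < 2^n" by simp
    have h1: "D * real (kn n t) / 2^n \<le> t * 2^n / 2^n" using a(1) p2 by (intro divide_right_mono) auto
    have h2: "(t * 2^n - D) / 2^n \<le> D * real (kn n t) / 2^n" using a(2) p2 by (intro divide_right_mono) auto
    have h3: "(t * 2^n - D) / 2^n = t - D / 2^n" using p2 by (simp add: diff_divide_distrib)
    show ?thesis unfolding u_def using h1 h2 h3 p2 by simp
  qed
  have u_lim: "(\<lambda>n. u n t) \<longlonglongrightarrow> t" if "0 \<le> t" for t
  proof (rule tendsto_sandwich[of "\<lambda>n. t - D / 2^n" _ _ "\<lambda>n. t"])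
    show "\<forall>\<^sub>F n in sequentially. t - D / 2 ^ n \<le> u n t" "\<forall>\<^sub>F n in sequentially. u n t \<le> t"
      using u_bd[OF that] by auto
    have "(\<lambda>n. D * inverse (2^n)) \<longlonglongrightarrow> 0"
      by (rule tendsto_mult_right_zero) (rule LIMSEQ_inverse_realpow_zero, simp)
    then have "(\<lambda>n. t - D * inverse (2^n)) \<longlonglongrightarrow> t - 0" by (intro tendsto_intros)
    then show "(\<lambda>n. t - D / 2 ^ n) \<longlonglongrightarrow> t" by (simp add: divide_inverse)
  qed simp
  have sd: "dist (\<sigma> s n) (\<sigma> t m) = \<bar>u n s - u m t\<bar>" if "s \<le> D" "t \<le> D" for s t n m
    unfolding \<sigma>_def u_def D_def
    using dyad_cross[OF MX pX qX kn_le[OF that(1)] kn_le[OF that(2)]] D_def by simp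
  have conv: "\<exists>l\<in>X. \<sigma> t \<longlonglongrightarrow> l" if "0 \<le> t" "t \<le> D" for t
  proof -
    have "Cauchy (\<lambda>n. u n t)" using u_lim[OF that(1)] by (rule LIMSEQ_imp_Cauchy)
    then have "Cauchy (\<sigma> t)" unfolding Cauchy_def using sd[OF that(2) that(2)] by (simp add: dist_real_def)
    moreover have "\<forall>n. \<sigma> t n \<in> X" unfolding \<sigma>_def using dyad_in[OF MX pX qX] by blast
    ultimately show ?thesis using compact_imp_complete[OF assms(1)] by (meson completeE)
  qed
  define g where "g t = lim (\<sigma> t)" for t
  have glim: "\<sigma> t \<longlonglongrightarrow> g t" "g t \<in> X" if "0 \<le> t" "t \<le> D" for t
    using conv[OF that] limI unfolding g_def by metis+
  have "shortest_curve X g 0 D"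
    unfolding shortest_curve_def
  proof (intro conjI ballI)
    show "0 \<le> D" using D by simp
    show "g ` {0..D} \<subseteq> X" using glim by auto
    fix s t assume s: "s \<in> {0..D}" and t: "t \<in> {0..D}"
    have "(\<lambda>n. dist (\<sigma> s n) (\<sigma> t n)) \<longlonglongrightarrow> dist (g s) (g t)"
      using glim s t by (intro tendsto_intros) auto
    moreover have "(\<lambda>n. dist (\<sigma> s n) (\<sigma> t n)) \<longlonglongrightarrow> \<bar>s - t\<bar>"
      using sd s t u_lim s t by (auto intro!: tendsto_intros)
    ultimately show "dist (g s) (g t) = \<bar>s - t\<bar>" by (rule LIMSEQ_unique)
  qed
  moreover have "g 0 = p"
  proof -
    have "\<sigma> 0 = (\<lambda>n. p)" unfolding \<sigma>_def kn_def using dyad_zero[OF MX pX qX] by simp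
    then show ?thesis unfolding g_def by simp
  qed
  moreover have "g D = q"
  proof -
    have "kn n D = 2^n" for n unfolding kn_def using D by simp
    then have "\<sigma> D = (\<lambda>n. q)" unfolding \<sigma>_def using dyad_top[OF MX pX qX] by simp
    then show ?thesis unfolding g_def by simp
  qed
  ultimately show ?thesis unfolding D_def by blast
qed




lemma mid_from_approx:
  fixes X :: "'a::metric_space set"
  assumes X: "compact X" and pX: "p \<in> X" and qX: "q \<in> X"
    and ap: "\<And>e. e > 0 \<Longrightarrow> \<exists>m\<in>X. dist p m \<le> dist p q / 2 + e \<and> dist m q \<le> dist p q / 2 + e"
  shows "\<exists>m\<in>X. dist p m = dist p q / 2 \<and> dist m q = dist p q / 2"
proof -
  have "continuous_on X (\<lambda>m. max (dist p m) (dist m q))" by (intro continuous_intros)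
  then obtain m0 where m0: "m0 \<in> X" "\<And>y. y \<in> X \<Longrightarrow> max (dist p m0) (dist m0 q) \<le> max (dist p y) (dist y q)"
    using continuous_attains_inf[OF X] pX by blast
  have "max (dist p m0) (dist m0 q) \<le> dist p q / 2"
  proof (rule field_le_epsilon)
    fix e :: real assume "e > 0"
    then obtain m where "m \<in> X" "dist p m \<le> dist p q / 2 + e" "dist m q \<le> dist p q / 2 + e"
      using ap by blast
    then have "max (dist p m) (dist m q) \<le> dist p q / 2 + e" by simp
    then show "max (dist p m0) (dist m0 q) \<le> dist p q / 2 + e" using m0(2)[OF \<open>m \<in> X\<close>] by linarith
  qed
  moreover have "dist p q \<le> dist p m0 + dist m0 q" by (rule dist_triangle)
  ultimately show ?thesis using m0(1) by (intro bexI[of _ m0]) auto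
qed

lemma length_space_approx_mid:
  fixes X :: "'a::metric_space set"
  assumes L: "length_space X" and pX: "p \<in> X" and qX: "q \<in> X" and e: "e > 0"
  shows "\<exists>m\<in>X. dist p m \<le> dist p q / 2 + e \<and> dist m q \<le> dist p q / 2 + e"
proof -
  let ?G = "{g. path g \<and> path_image g \<subseteq> X \<and> pathstart g = p \<and> pathfinish g = q}"
  have "(INF g \<in> ?G. curve_length g 0 1) = ereal (dist p q)"
    using L pX qX unfolding length_space_def by auto
  moreover have "ereal (dist p q) < ereal (dist p q + e)" using e by simp
  ultimately have "(INF g \<in> ?G. curve_length g 0 1) < ereal (dist p q + e)" by simp
  then obtain g where g: "g \<in> ?G" and gl: "curve_length g 0 1 < ereal (dist p q + e)"
    by (auto simp: INF_less_iff)
  have cont: "continuous_on {0..1} (\<lambda>t. dist p (g t))"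
    using g by (auto simp: path_def intro!: continuous_intros)
  have "\<exists>t. 0 \<le> t \<and> t \<le> 1 \<and> dist p (g t) = dist p q / 2"
    using g by (intro IVT'[OF _ _ _ cont]) (auto simp: pathstart_def pathfinish_def)
  then obtain t where t: "0 \<le> t" "t \<le> 1" "dist p (g t) = dist p q / 2" by blast
  have mX: "g t \<in> X" using g t by (auto simp: path_image_def)
  define tt where "tt i = (if i = 0 then 0 else if i = (1::nat) then t else (1::real))" for i
  have "(2::nat, tt) \<in> {(n, t). t 0 = 0 \<and> t n = 1 \<and> (\<forall>i<n. t i \<le> t (Suc i))}"
    using t by (auto simp: tt_def less_2_cases_iff)
  then have "ereal (\<Sum>i<fst (2::nat, tt). dist (g (snd (2::nat, tt) i)) (g (snd (2::nat, tt) (Suc i)))) \<le> curve_length g 0 1"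
    unfolding curve_length_def by (rule SUP_upper)
  moreover have "(\<Sum>i<fst (2::nat, tt). dist (g (snd (2::nat, tt) i)) (g (snd (2::nat, tt) (Suc i))))
        = dist (g 0) (g t) + dist (g t) (g 1)"
    by (simp add: tt_def numeral_2_eq_2)
  ultimately have "ereal (dist (g 0) (g t) + dist (g t) (g 1)) \<le> curve_length g 0 1" by simp
  then have "ereal (dist (g 0) (g t) + dist (g t) (g 1)) < ereal (dist p q + e)" using gl by (rule le_less_trans)
  then have "dist (g 0) (g t) + dist (g t) (g 1) < dist p q + e" by simp
  then have "dist (g t) q < dist p q / 2 + e"
    using g t by (simp add: pathstart_def pathfinish_def)
  then show ?thesis using t mX e by (intro bexI[of _ "g t"]) auto
qed

lemma menger_mid:
  fixes X :: "'a::metric_space set"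
  assumes X: "compact X" and MC: "menger_convex X" and pX: "p \<in> X" and qX: "q \<in> X"
  shows "\<exists>m\<in>X. dist p m = dist p q / 2 \<and> dist m q = dist p q / 2"
proof (rule ccontr)
  assume nm: "\<not> ?thesis"
  define d where "d = dist p q"
  define B where "B = X \<inter> {z. dist p z + dist z q = d} \<inter> {z. dist p z \<le> d/2}"
  have cB: "compact B" unfolding B_def using X
    by (intro compact_Int_closed closed_Int closed_Collect_eq closed_Collect_le continuous_intros) auto
  have "p \<in> B" unfolding B_def d_def using pX by simp
  moreover have "continuous_on B (\<lambda>z. dist p z)" by (intro continuous_intros)
  ultimately obtain z0 where z0: "z0 \<in> B" "\<And>y. y \<in> B \<Longrightarrow> dist p y \<le> dist p z0"
    using continuous_attains_sup[OF cB, of "\<lambda>z. dist p z"] by blast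
  have z0X: "z0 \<in> X" and z0b: "dist p z0 + dist z0 q = d" and z0l: "dist p z0 \<le> d/2"
    using z0(1) by (auto simp: B_def)
  have z0lt: "dist p z0 < d/2"
  proof (rule ccontr)
    assume "\<not> ?thesis"
    then have "dist p z0 = d/2" "dist z0 q = d/2" using z0l z0b by auto
    then show False using nm z0X d_def by blast
  qed
  define \<delta> where "\<delta> = d/2 - dist p z0"
  have \<delta>: "\<delta> > 0" using z0lt by (simp add: \<delta>_def)
  have btw: "dist z0 w > \<delta>" if w: "w \<in> X" "dist z0 w + dist w q = dist z0 q" "w \<noteq> z0" for w
  proof (rule ccontr)
    assume "\<not> ?thesis"
    have t1: "dist p w \<le> dist p z0 + dist z0 w" by (rule dist_triangle)
    have t2: "dist p q \<le> dist p w + dist w q" by (rule dist_triangle)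
    have pw: "dist p w = dist p z0 + dist z0 w" using t1 t2 w(2) z0b d_def by linarith
    have "w \<in> B" unfolding B_def using w pw z0b \<open>\<not> dist z0 w > \<delta>\<close> t2 d_def \<delta>_def by auto
    then have "dist p w \<le> dist p z0" by (rule z0(2))
    then show False using pw w(3) by simp
  qed
  define C where "C = X \<inter> {w. dist z0 w + dist w q = dist z0 q} \<inter> {w. \<delta> \<le> dist z0 w}"
  have cC: "compact C" unfolding C_def using X
    by (intro compact_Int_closed closed_Int closed_Collect_eq closed_Collect_le continuous_intros) auto
  have "dist z0 q = d - dist p z0" using z0b by simp
  then have "q \<in> C" unfolding C_def using qX z0lt \<delta>_def d_def by auto
  moreover have "continuous_on C (\<lambda>w. dist z0 w)" by (intro continuous_intros)
  ultimately obtain w0 where w0: "w0 \<in> C" "\<And>y. y \<in> C \<Longrightarrow> dist z0 w0 \<le> dist z0 y"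
    using continuous_attains_inf[OF cC, of "\<lambda>w. dist z0 w"] by blast
  have w0X: "w0 \<in> X" and w0b: "dist z0 w0 + dist w0 q = dist z0 q" and w0l: "\<delta> \<le> dist z0 w0"
    using w0(1) by (auto simp: C_def)
  have "z0 \<noteq> w0" using w0l \<delta> by auto
  then obtain v where v: "v \<in> X" "v \<noteq> z0" "v \<noteq> w0" "dist z0 v + dist v w0 = dist z0 w0"
    using MC z0X w0X unfolding menger_convex_def by blast
  have "dist z0 v + dist v q = dist z0 q"
  proof -
    have "dist v q \<le> dist v w0 + dist w0 q" by (rule dist_triangle)
    moreover have "dist z0 q \<le> dist z0 v + dist v q" by (rule dist_triangle)
    ultimately show ?thesis using v(4) w0b by linarith
  qed
  then have "dist z0 v > \<delta>" using btw v by blast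
  then have "v \<in> C" unfolding C_def using v(1) \<open>dist z0 v + dist v q = dist z0 q\<close> by auto
  then have "dist z0 w0 \<le> dist z0 v" by (rule w0(2))
  moreover have "dist v w0 > 0" using v(3) by simp
  ultimately show False using v(4) by linarith
qed




lemma tt_in:
  assumes "compact S"
  shows "travel_time S p \<in> mspace (CS S)"
proof -
  have c: "continuous_on S (travel_time S p)"
    unfolding travel_time_def by (rule continuous_on_cong[THEN iffD1, OF refl _ continuous_on_dist[OF continuous_on_const continuous_on_id, of S p]]) auto
  have "compact (travel_time S p ` S)" by (rule compact_continuous_image[OF c assms])
  then have "bounded (travel_time S p ` S)" by (rule compact_imp_bounded)
  then show ?thesis using c unfolding CS_def
    by (auto simp: travel_time_def)
qed

lemma tt_le:
  assumes "compact S"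
  shows "mdist (CS S) (travel_time S p) (travel_time S q) \<le> dist p q"
  unfolding CS_def
proof (rule mdist_cfunspace_le)
  show "0 \<le> dist p q" by simp
  fix z assume "z \<in> topspace (top_of_set S)"
  then have "z \<in> S" by simp
  then show "mdist euclidean_metric (travel_time S p z) (travel_time S q z) \<le> dist p q"
    by (simp add: travel_time_def dist_real_def) (metis abs_dist_diff_le dist_commute)
qed

lemma tt_ge:
  assumes "compact S" "z \<in> S"
  shows "\<bar>dist p z - dist q z\<bar> \<le> mdist (CS S) (travel_time S p) (travel_time S q)"
proof -
  have "mdist euclidean_metric (travel_time S p z) (travel_time S q z)
          \<le> mdist (CS S) (travel_time S p) (travel_time S q)"
    using mdist_cfunspace_imp_mdist_le[OF tt_in[OF assms(1), of p, unfolded CS_def] tt_in[OF assms(1), of q, unfolded CS_def]]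
      assms by (simp add: CS_def)
  then show ?thesis using assms by (auto simp: travel_time_def dist_real_def)
qed

lemma tt_cont:
  assumes "compact S"
  shows "continuous_map (top_of_set X) (mtopology_of (CS S)) (travel_time S)"
proof -
  have "Lipschitz_continuous_map (submetric euclidean_metric X) (CS S) (travel_time S)"
    unfolding Lipschitz_continuous_map_def
    using tt_in[OF assms] tt_le[OF assms] by (intro conjI exI[of _ 1]) auto
  then have "continuous_map (mtopology_of (submetric euclidean_metric X)) (mtopology_of (CS S)) (travel_time S)"
    by (rule Lipschitz_continuous_imp_continuous_map)
  then show ?thesis by (simp add: mtopology_of_submetric)
qed

lemma tt_haus: "Hausdorff_space (mtopology_of (CS S))"
  unfolding mtopology_of_def by (rule Metric_space.Hausdorff_space_mtopology) simp

lemma geodesic_exists: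
  fixes X :: "'a::metric_space set"
  assumes "compact X" "length_space X \<or> menger_convex X" "p \<in> X" "q \<in> X"
  shows "\<exists>g. shortest_curve X g 0 (dist p q) \<and> g 0 = p \<and> g (dist p q) = q"
proof (rule geodesic_from_mid[OF assms(1) _ assms(3,4)])
  fix x y assume "x \<in> X" "y \<in> X"
  then show "\<exists>m\<in>X. dist x m = dist x y / 2 \<and> dist m y = dist x y / 2"
  proof (cases "length_space X")
    case True
    then show ?thesis using mid_from_approx[OF assms(1) \<open>x\<in>X\<close> \<open>y\<in>X\<close>] length_space_approx_mid[of X x y]
      \<open>x\<in>X\<close> \<open>y\<in>X\<close> by blast
  next
    case False
    then have "menger_convex X" using assms(2) by blast
    then show ?thesis using menger_mid[OF assms(1)] \<open>x\<in>X\<close> \<open>y\<in>X\<close> by blast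
  qed
qed

lemma ext_lemma:
  fixes X :: "'a::metric_space set"
  assumes X: "compact X" "length_space X" and pX: "p \<in> X" and qX: "q \<in> X" and zS: "z \<in> S"
    and zX: "z \<in> X" and d: "dist p z = dist p q + dist q z"
  shows "extends_to_S X S p q"
proof -
  define d1 where "d1 = dist p q"
  define d2 where "d2 = dist q z"
  obtain f1 where f1: "shortest_curve X f1 0 d1" "f1 0 = p" "f1 d1 = q"
    using geodesic_exists[OF X(1) _ pX qX] X(2) unfolding d1_def by blast
  obtain f2 where f2: "shortest_curve X f2 0 d2" "f2 0 = q" "f2 d2 = z"
    using geodesic_exists[OF X(1) _ qX zX] X(2) unfolding d2_def by blast
  have h: "shortest_curve X (\<lambda>t. f2 (t - d1)) d1 (d1 + d2)" by (rule sc_shift[OF f2(1)])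
  define g where "g = (\<lambda>t. if t \<le> d1 then f1 t else f2 (t - d1))"
  have g: "shortest_curve X g 0 (d1 + d2)"
    unfolding g_def using f1 f2 d d1_def d2_def by (intro sc_concat[OF f1(1) h]) auto
  have d2n: "d2 \<ge> 0" unfolding d2_def by simp
  have "g (d1 + d2) = z"
  proof (cases "d2 = 0")
    case True
    then have "q = z" unfolding d2_def by simp
    then show ?thesis using True f1 unfolding g_def by simp
  next
    case False
    then show ?thesis using d2n f2 unfolding g_def by simp
  qed
  moreover have "g 0 = p" "g d1 = q" using f1 d1_def unfolding g_def by auto
  ultimately show ?thesis unfolding extends_to_S_def using g zS d2n d1_def
    by (intro exI[of _ g] exI[of _ "d1 + d2"]) auto
qed

theorem mainTheorem4:
  shows "(\<forall>(X :: 'a::metric_space set) S U.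
            compact X \<and> busemann_G_space X \<and> openin (top_of_set X) U \<and> U \<noteq> {} \<and>
            S = closure U \<longrightarrow> travel_time_embedding X S)
       \<and> (\<forall>(X :: 'a set) S (eps :: real).
            compact X \<and> length_space X \<and> S \<subseteq> X \<and> closed S \<and> S \<noteq> {} \<and>
            travel_time_embedding X S \<and> eps > 0 \<longrightarrow>
            (FLIE eps X S \<longleftrightarrow>
               (\<forall>p\<in>X. \<forall>q\<in>X. dist p q < eps \<longrightarrow> extends_to_S X S p q \<or> extends_to_S X S q p)))"
proof (intro conjI allI impI)
  fix X :: "'a set" and S U
  assume A: "compact X \<and> busemann_G_space X \<and> openin (top_of_set X) U \<and> U \<noteq> {} \<and> S = closure U"
  then have X: "compact X" and BG: "busemann_G_space X" and U: "openin (top_of_set X) U"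
    and Une: "U \<noteq> {}" and S: "S = closure U" by auto
  have UX: "U \<subseteq> X" using openin_subset[OF U] by simp
  have SX: "S \<subseteq> X" using S UX closure_minimal[OF UX compact_imp_closed[OF X]] by simp
  have "compact (X \<inter> S)" using X by (intro compact_Int_closed) (simp_all add: S)
  then have cS: "compact S" using SX by (simp add: Int_absorb1)
  have US: "U \<subseteq> S" using S closure_subset by blast
  have MC: "menger_convex X" and NB: "non_branching X" using BG by (auto simp: busemann_G_space_def)
  have geo: "\<exists>g. shortest_curve X g 0 (dist x y) \<and> g 0 = x \<and> g (dist x y) = y" if "x \<in> X" "y \<in> X" for x y
    using geodesic_exists[OF X _ that] MC by blast
  have inj: "inj_on (travel_time S) X"
  proof (rule inj_onI)
    fix p q assume pX: "p \<in> X" and qX: "q \<in> X" and e: "travel_time S p = travel_time S q"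
    have eq: "dist p z = dist q z" if "z \<in> S" for z
      using fun_cong[OF e, of z] that by (simp add: travel_time_def)
    obtain z0 where z0: "z0 \<in> U" using Une by blast
    define D where "D = dist p z0"
    show "p = q"
    proof (cases "D = 0")
      case True
      then have "p = z0" unfolding D_def by simp
      moreover have "dist q z0 = 0" using eq[of z0] z0 US True D_def by auto
      ultimately show ?thesis by simp
    next
      case False
      then have D: "D > 0" unfolding D_def by simp
      have z0X: "z0 \<in> X" using z0 UX by blast
      obtain g where g: "shortest_curve X g 0 D" "g 0 = p" "g D = z0"
        using geo[OF pX z0X] unfolding D_def by blast
      obtain V where V: "open V" "U = X \<inter> V" using U by (auto simp: openin_open)
      obtain \<rho> where \<rho>: "\<rho> > 0" "ball z0 \<rho> \<subseteq> V" using V z0 open_contains_ball by blast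
      define s where "s = min D (\<rho>/2)"
      have s: "0 < s" "s \<le> D" "s < \<rho>" using D \<rho> by (auto simp: s_def)
      define w where "w = g (D - s)"
      have gd: "\<And>a b. a \<in> {0..D} \<Longrightarrow> b \<in> {0..D} \<Longrightarrow> dist (g a) (g b) = \<bar>a - b\<bar>"
        and gX: "g ` {0..D} \<subseteq> X" using g(1) by (auto simp: shortest_curve_def)
      have wz: "dist w z0 = s" unfolding w_def using gd[of "D-s" D] s g(3) by simp
      have wX: "w \<in> X" unfolding w_def using gX s by auto
      have "w \<in> ball z0 \<rho>" using wz s by (simp add: dist_commute)
      then have wU: "w \<in> U" using wX \<rho> V by auto
      have pw: "dist p w = D - s" unfolding w_def using gd[of 0 "D-s"] s g(2) by simp
      have qw: "dist q w = D - s" using eq[of w] wU US pw by auto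
      have qz: "dist q z0 = D" using eq[of z0] z0 US D_def by auto
      obtain f where f: "shortest_curve X f 0 (D - s)" "f 0 = q" "f (D - s) = w"
        using geo[OF qX wX] qw by auto
      define k where "k = (\<lambda>t. if t \<le> D - s then f t else g t)"
      have gsub: "shortest_curve X g (D - s) D" by (rule sc_sub[OF g(1)]) (use s in auto)
      have k: "shortest_curve X k 0 D"
        unfolding k_def by (rule sc_concat[OF f(1) gsub]) (use f g qz w_def in auto)
      have rg: "shortest_curve X (\<lambda>t. g (D - t)) 0 D" by (rule sc_rev[OF g(1)])
      have rk: "shortest_curve X (\<lambda>t. k (D - t)) 0 D" by (rule sc_rev[OF k])
      have agree: "\<forall>t\<in>{0..s}. g (D - t) = k (D - t)"
        using f(3) unfolding k_def w_def by auto
      have pre: "shortest_curve X (\<lambda>t. g (D - t)) 0 D \<and> shortest_curve X (\<lambda>t. k (D - t)) 0 D \<and>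
          0 < s \<and> s \<le> min D D \<and> (\<forall>t\<in>{0..s}. (\<lambda>t. g (D - t)) t = (\<lambda>t. k (D - t)) t)"
        using rg rk s agree by simp
      have nb1: "\<And>G1 G2. shortest_curve X G1 0 D \<and> shortest_curve X G2 0 D \<and> 0 < s \<and> s \<le> min D D
          \<and> (\<forall>t\<in>{0..s}. G1 t = G2 t) \<Longrightarrow> \<forall>t\<in>{0..min D D}. G1 t = G2 t"
        using NB unfolding non_branching_def by blast
      have "\<forall>t\<in>{0..min D D}. (\<lambda>t. g (D - t)) t = (\<lambda>t. k (D - t)) t"
        by (rule nb1[OF pre])
      then have "g (D - D) = k (D - D)" using D by (metis atLeastAtMost_iff min.idem order_refl less_imp_le)
      then have "g 0 = k 0" by simp
      then show "p = q" using g(2) f(2) D s unfolding k_def by simp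
    qed
  qed
  show "travel_time_embedding X S"
    unfolding travel_time_embedding_def
    by (rule continuous_imp_embedding_map[OF tt_cont[OF cS]])
       (use X inj tt_haus in \<open>auto intro: compact_space_subtopology\<close>)
next
  fix X :: "'a set" and S and eps :: real
  assume A: "compact X \<and> length_space X \<and> S \<subseteq> X \<and> closed S \<and> S \<noteq> {} \<and> travel_time_embedding X S \<and> eps > 0"
  then have X: "compact X" and L: "length_space X" and SX: "S \<subseteq> X" and Sc: "closed S"
    and Sne: "S \<noteq> {}" and E: "travel_time_embedding X S" by auto
  have "compact (X \<inter> S)" using X Sc by (intro compact_Int_closed)
  then have cS: "compact S" using SX by (simp add: Int_absorb1)
  show "FLIE eps X S \<longleftrightarrow>
     (\<forall>p\<in>X. \<forall>q\<in>X. dist p q < eps \<longrightarrow> extends_to_S X S p q \<or> extends_to_S X S q p)"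
  proof
    assume F: "FLIE eps X S"
    show "\<forall>p\<in>X. \<forall>q\<in>X. dist p q < eps \<longrightarrow> extends_to_S X S p q \<or> extends_to_S X S q p"
    proof (intro ballI impI)
      fix p q assume pX: "p \<in> X" and qX: "q \<in> X" and pq: "dist p q < eps"
      have md: "mdist (CS S) (travel_time S p) (travel_time S q) = dist p q"
        using F pX qX pq unfolding FLIE_def local_isometry_CS_def by blast
      have "continuous_on S (\<lambda>z. \<bar>dist p z - dist q z\<bar>)" by (intro continuous_intros)
      then obtain z where zS: "z \<in> S" and zmax: "\<And>y. y \<in> S \<Longrightarrow> \<bar>dist p y - dist q y\<bar> \<le> \<bar>dist p z - dist q z\<bar>"
        using continuous_attains_sup[OF cS Sne] by blast
      have "mdist (CS S) (travel_time S p) (travel_time S q) \<le> \<bar>dist p z - dist q z\<bar>"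
        unfolding CS_def
        by (rule mdist_cfunspace_le) (use zmax in \<open>auto simp: travel_time_def dist_real_def\<close>)
      moreover have "\<bar>dist p z - dist q z\<bar> \<le> dist p q"
        by (metis abs_dist_diff_le dist_commute)
      ultimately have zz: "\<bar>dist p z - dist q z\<bar> = dist p q" using md by linarith
      have zX: "z \<in> X" using zS SX by blast
      show "extends_to_S X S p q \<or> extends_to_S X S q p"
      proof (cases "dist q z \<le> dist p z")
        case True
        then have "dist p z = dist p q + dist q z" using zz by linarith
        then show ?thesis using ext_lemma[OF X L pX qX zS zX] by blast
      next
        case False
        then have "dist q z = dist q p + dist p z" using zz by (simp add: dist_commute)
        then show ?thesis using ext_lemma[OF X L qX pX zS zX] by blast
      qed
    qed
  next
    assume R: "\<forall>p\<in>X. \<forall>q\<in>X. dist p q < eps \<longrightarrow> extends_to_S X S p q \<or> extends_to_S X S q p"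
    have ext: "dist p q \<le> mdist (CS S) (travel_time S p) (travel_time S q)"
      if ex: "extends_to_S X S p q" for p q
    proof -
      obtain g c where g: "shortest_curve X g 0 c" "g 0 = p" "dist p q \<le> c" "g (dist p q) = q" "g c \<in> S"
        using ex unfolding extends_to_S_def by blast
      have gd: "\<And>a b. a \<in> {0..c} \<Longrightarrow> b \<in> {0..c} \<Longrightarrow> dist (g a) (g b) = \<bar>a - b\<bar>"
        using g(1) by (auto simp: shortest_curve_def)
      have "dist p (g c) = c" using gd[of 0 c] g by (simp add: shortest_curve_def)
      moreover have "dist q (g c) = c - dist p q" using gd[of "dist p q" c] g by (simp add: shortest_curve_def)
      ultimately have "\<bar>dist p (g c) - dist q (g c)\<bar> = dist p q" by simp
      then show ?thesis using tt_ge[OF cS g(5), of p q] by simp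
    qed
    show "FLIE eps X S"
      unfolding FLIE_def local_isometry_CS_def
    proof (intro conjI ballI impI)
      show "travel_time_embedding X S" by (rule E)
      show "continuous_map (top_of_set X) (mtopology_of (CS S)) (travel_time S)" by (rule tt_cont[OF cS])
      fix p q assume pX: "p \<in> X" and qX: "q \<in> X" and pq: "dist p q < eps"
      have "dist p q \<le> mdist (CS S) (travel_time S p) (travel_time S q)"
      proof (cases "extends_to_S X S p q")
        case True then show ?thesis by (rule ext)
      next
        case False
        then have "extends_to_S X S q p" using R pX qX pq by blast
        then have "dist q p \<le> mdist (CS S) (travel_time S q) (travel_time S p)" by (rule ext)
        then show ?thesis by (simp add: dist_commute Metric_space.commute[OF Metric_space_mspace_mdist])
      qed
      then show "mdist (CS S) (travel_time S p) (travel_time S q) = dist p q"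
        using tt_le[OF cS, of p q] by linarith
    qed
  qed
qed


end
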